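(* Fix integers $d\geq 1$ and $k\geq 1$. For any edge $e$ of $\mathbb{Z}^d$ there exists a unique $z\in(2k\mathbb{Z})^d$, denoted $g(e)$, such that $e$ is an edge of $Q_k^z$. Furthermore, any cycle $(e_1,\dots,e_n)$ in $\mathbb{Z}^d$ contains at least two edges $e_i,e_j$ (with $i\neq j$) such that $g(e_i)=g(e_j)$.
   Context: For $z\in(2k\mathbb{Z})^d$ let $B_k^z=([-k,k]^d\cap\mathbb{Z}^d)+z$, let $E(B_k^z)$ be the set of edges of $\mathbb{Z}^d$ with both endpoints in $B_k^z$, and let $Q_k^z$ be the subgraph of $B_k^z$ with edge set $\{(x,y)\in E(B_k^z):\ \text{there is no }\ell\in\{1,\dots,d\}\text{ with }x_\ell=y_\ell=z_\ell-k\}$. *)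

theory Defs
  imports Main
begin

text \<open>Points of Z^d are functions 'd => int for a finite index type 'd (d = CARD('d) >= 1).
Edges of Z^d are unordered pairs {x,y} of nearest neighbours.\<close>

definition adj :: "('d::finite \<Rightarrow> int) \<Rightarrow> ('d \<Rightarrow> int) \<Rightarrow> bool" where
  "adj x y \<longleftrightarrow> (\<Sum>i\<in>UNIV. \<bar>x i - y i\<bar>) = 1"

definition lattice_edges :: "('d::finite \<Rightarrow> int) set set" where
  "lattice_edges = {{x, y} | x y. adj x y}"

definition lat2k :: "int \<Rightarrow> ('d::finite \<Rightarrow> int) set" where
  "lat2k k = {z. \<forall>i. (2 * k) dvd z i}"

definition box :: "int \<Rightarrow> ('d::finite \<Rightarrow> int) \<Rightarrow> ('d \<Rightarrow> int) set" where
  "box k z = {x. \<forall>i. z i - k \<le> x i \<and> x i \<le> z i + k}"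

definition Q_edges :: "int \<Rightarrow> ('d::finite \<Rightarrow> int) \<Rightarrow> ('d \<Rightarrow> int) set set" where
  "Q_edges k z = {{x, y} | x y. adj x y \<and> x \<in> box k z \<and> y \<in> box k z
                     \<and> \<not> (\<exists>l. x l = z l - k \<and> y l = z l - k)}"

definition g :: "int \<Rightarrow> ('d::finite \<Rightarrow> int) set \<Rightarrow> ('d \<Rightarrow> int)" where
  "g k e = (THE z. z \<in> lat2k k \<and> e \<in> Q_edges k z)"

definition is_cycle :: "('d::finite \<Rightarrow> int) list \<Rightarrow> bool" where
  "is_cycle vs \<longleftrightarrow> length vs \<ge> 3 \<and> distinct vs \<and>
     (\<forall>i < length vs. adj (vs ! i) (vs ! ((i + 1) mod length vs)))"

definition cyc_edge :: "('d::finite \<Rightarrow> int) list \<Rightarrow> nat \<Rightarrow> ('d \<Rightarrow> int) set" where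
  "cyc_edge vs i = {vs ! i, vs ! ((i + 1) mod length vs)}"

end

theory Submission
  imports Defs
begin

definition FF :: "int \<Rightarrow> int \<Rightarrow> int" where
  "FF k m = 2 * k * ((m + k - 1) div (2 * k))"

lemma FF_ok:
  assumes "k \<ge> 1"
  shows "(2*k) dvd FF k m \<and> FF k m - k < m \<and> m \<le> FF k m + k"
proof -
  define q where "q = (m + k - 1) div (2 * k)"
  define r where "r = (m + k - 1) mod (2 * k)"
  have e: "m + k - 1 = 2*k*q + r" unfolding q_def r_def by simp
  have r: "0 \<le> r" "r < 2*k" unfolding r_def using assms by auto
  have "FF k m = 2*k*q" unfolding FF_def q_def by simp
  then show ?thesis using e r by auto
qed

lemma mult_uniq:
  fixes a b k m :: int
  assumes "k \<ge> 1" "(2*k) dvd a" "(2*k) dvd b" "a - k < m" "m \<le> a + k" "b - k < m" "m \<le> b + k"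
  shows "a = b"
proof -
  obtain t where t: "a - b = 2*k*t" using assms(2,3)
    by (metis dvd_diff dvdE)
  have "t = 0"
  proof (rule ccontr)
    assume "t \<noteq> 0"
    then have "t \<ge> 1 \<or> t \<le> -1" by auto
    then show False
    proof
      assume "t \<ge> 1"
      then have "2*k*t \<ge> 2*k*1" using assms(1) by (intro mult_left_mono) auto
      then show False using t assms by linarith
    next
      assume "t \<le> -1"
      then have "2*k*t \<le> 2*k*(-1)" using assms(1) by (intro mult_left_mono) auto
      then show False using t assms by linarith
    qed
  qed
  then show ?thesis using t by simp
qed

lemma adj_sym: "adj x y \<Longrightarrow> adj y x"
  unfolding adj_def by (simp add: abs_minus_commute)

lemma adj_le1: "adj x y \<Longrightarrow> \<bar>x l - y l\<bar> \<le> 1"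
proof -
  assume "adj x y"
  then have "(\<Sum>i\<in>UNIV. \<bar>x i - y i\<bar>) = 1" unfolding adj_def .
  moreover have "\<bar>x l - y l\<bar> \<le> (\<Sum>i\<in>UNIV. \<bar>x i - y i\<bar>)"
    by (rule member_le_sum) auto
  ultimately show ?thesis by simp
qed

lemma coord:
  fixes a b c k :: int
  assumes "\<bar>a - b\<bar> \<le> 1"
  shows "(c-k \<le> a \<and> a \<le> c+k \<and> c-k \<le> b \<and> b \<le> c+k \<and> \<not>(a = c-k \<and> b = c-k))
     \<longleftrightarrow> (c-k < max a b \<and> max a b \<le> c+k)"
  using assms unfolding max_def abs_le_iff by (cases "a \<le> b") auto

lemma Qchar:
  assumes "adj x y"
  shows "{x,y} \<in> Q_edges k z \<longleftrightarrow> (\<forall>l. z l - k < max (x l) (y l) \<and> max (x l) (y l) \<le> z l + k)"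
proof
  assume "{x,y} \<in> Q_edges k z"
  then obtain x' y' where e: "{x,y} = {x',y'}" and a: "adj x' y'" and
    b: "x' \<in> box k z" "y' \<in> box k z" "\<not> (\<exists>l. x' l = z l - k \<and> y' l = z l - k)"
    unfolding Q_edges_def by blast
  have m: "max (x l) (y l) = max (x' l) (y' l)" for l
    using e by (auto simp: doubleton_eq_iff max.commute)
  show "\<forall>l. z l - k < max (x l) (y l) \<and> max (x l) (y l) \<le> z l + k"
  proof
    fix l
    have "z l - k \<le> x' l \<and> x' l \<le> z l + k \<and> z l - k \<le> y' l \<and> y' l \<le> z l + k
          \<and> \<not>(x' l = z l - k \<and> y' l = z l - k)"
      using b unfolding box_def by auto
    then show "z l - k < max (x l) (y l) \<and> max (x l) (y l) \<le> z l + k"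
      using coord[OF adj_le1[OF a, of l]] m by simp
  qed
next
  assume h: "\<forall>l. z l - k < max (x l) (y l) \<and> max (x l) (y l) \<le> z l + k"
  have "z l - k \<le> x l \<and> x l \<le> z l + k \<and> z l - k \<le> y l \<and> y l \<le> z l + k
          \<and> \<not>(x l = z l - k \<and> y l = z l - k)" for l
    using coord[OF adj_le1[OF assms, of l], of "z l" k] h by blast
  then have "x \<in> box k z" "y \<in> box k z" "\<not> (\<exists>l. x l = z l - k \<and> y l = z l - k)"
    unfolding box_def by auto
  then show "{x,y} \<in> Q_edges k z" unfolding Q_edges_def using assms by blast
qed

lemma ex1_z:
  assumes k: "k \<ge> 1" and a: "adj x y"
  shows "(\<lambda>l. FF k (max (x l) (y l))) \<in> lat2k k \<and> {x,y} \<in> Q_edges k (\<lambda>l. FF k (max (x l) (y l)))"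
    and "z \<in> lat2k k \<and> {x,y} \<in> Q_edges k z \<Longrightarrow> z = (\<lambda>l. FF k (max (x l) (y l)))"
proof -
  have "(\<lambda>l. FF k (max (x l) (y l))) \<in> lat2k k"
    unfolding lat2k_def using FF_ok[OF k] by blast
  moreover have "{x,y} \<in> Q_edges k (\<lambda>l. FF k (max (x l) (y l)))"
    unfolding Qchar[OF a] using FF_ok[OF k] by blast
  ultimately show "(\<lambda>l. FF k (max (x l) (y l))) \<in> lat2k k \<and> {x,y} \<in> Q_edges k (\<lambda>l. FF k (max (x l) (y l)))"
    by blast
next
  assume h: "z \<in> lat2k k \<and> {x,y} \<in> Q_edges k z"
  have d: "(2*k) dvd z l" for l using h unfolding lat2k_def by blast
  have q: "z l - k < max (x l) (y l) \<and> max (x l) (y l) \<le> z l + k" for l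
    using h unfolding Qchar[OF a] by blast
  show "z = (\<lambda>l. FF k (max (x l) (y l)))"
  proof
    fix l
    have f: "(2*k) dvd FF k (max (x l) (y l)) \<and> FF k (max (x l) (y l)) - k < max (x l) (y l)
       \<and> max (x l) (y l) \<le> FF k (max (x l) (y l)) + k" by (rule FF_ok[OF k])
    show "z l = FF k (max (x l) (y l))"
      using mult_uniq[OF k d[of l] conjunct1[OF f] conjunct1[OF q[of l]] conjunct2[OF q[of l]]] f by blast
  qed
qed

lemma g_eq:
  assumes k: "k \<ge> 1" and a: "adj x y"
  shows "g k {x,y} = (\<lambda>l. FF k (max (x l) (y l)))"
  unfolding g_def
proof (rule the_equality)
  show "(\<lambda>l. FF k (max (x l) (y l))) \<in> lat2k k \<and> {x,y} \<in> Q_edges k (\<lambda>l. FF k (max (x l) (y l)))"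
    by (rule ex1_z(1)[OF k a])
  fix z assume "z \<in> lat2k k \<and> {x, y} \<in> Q_edges k z"
  then show "z = (\<lambda>l. FF k (max (x l) (y l)))" by (rule ex1_z(2)[OF k a])
qed

lemma adj_sum_le:
  assumes a: "adj u v" and s: "(\<Sum>l\<in>UNIV. u l) \<le> (\<Sum>l\<in>UNIV. v l)"
  shows "u l0 \<le> v l0"
proof (rule ccontr)
  assume "\<not> u l0 \<le> v l0"
  then have g1: "\<bar>u l0 - v l0\<bar> \<ge> 1" by simp
  have S: "(\<Sum>i\<in>UNIV. \<bar>u i - v i\<bar>) = \<bar>u l0 - v l0\<bar> + (\<Sum>i\<in>UNIV - {l0}. \<bar>u i - v i\<bar>)"
    by (simp add: sum.remove)
  have "(\<Sum>i\<in>UNIV - {l0}. \<bar>u i - v i\<bar>) = 0"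
    using a S g1 unfolding adj_def
    by (smt (verit, ccfv_SIG) abs_ge_zero sum_nonneg)
  then have z: "\<forall>i\<in>UNIV - {l0}. \<bar>u i - v i\<bar> = 0"
    by (subst (asm) sum_nonneg_eq_0_iff) auto
  have "(\<Sum>l\<in>UNIV. v l) - (\<Sum>l\<in>UNIV. u l) = (\<Sum>l\<in>UNIV. v l - u l)"
    by (simp add: sum_subtractf)
  also have "\<dots> = (v l0 - u l0) + (\<Sum>l\<in>UNIV - {l0}. v l - u l)"
    by (simp add: sum.remove)
  also have "(\<Sum>l\<in>UNIV - {l0}. v l - u l) = 0"
    using z by (intro sum.neutral) auto
  finally show False using s \<open>\<not> u l0 \<le> v l0\<close> by linarith
qed

theorem claim2p2:
  fixes k :: int
  assumes "k \<ge> 1"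
  shows "(\<forall>e \<in> (lattice_edges :: ('d::finite \<Rightarrow> int) set set).
            \<exists>!z. z \<in> lat2k k \<and> e \<in> Q_edges k z)
       \<and> (\<forall>vs :: ('d \<Rightarrow> int) list. is_cycle vs \<longrightarrow>
            (\<exists>i j. i < length vs \<and> j < length vs \<and> i \<noteq> j \<and>
                   g k (cyc_edge vs i) = g k (cyc_edge vs j)))"
proof (intro conjI ballI allI impI)
  fix e :: "('d \<Rightarrow> int) set"
  assume "e \<in> lattice_edges"
  then obtain x y where e: "e = {x,y}" and a: "adj x y" unfolding lattice_edges_def by blast
  show "\<exists>!z. z \<in> lat2k k \<and> e \<in> Q_edges k z"
    unfolding e using ex1_z[OF assms a] by blast
next
  fix vs :: "('d \<Rightarrow> int) list"
  assume c: "is_cycle vs"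
  define n where "n = length vs"
  have n3: "n \<ge> 3" and ad: "\<forall>i<n. adj (vs ! i) (vs ! ((i + 1) mod n))"
    using c unfolding is_cycle_def n_def by auto
  define s where "s = (\<lambda>v::'d \<Rightarrow> int. \<Sum>l\<in>UNIV. v l)"
  obtain i where i: "i < n" and im: "\<forall>j<n. s (vs ! j) \<le> s (vs ! i)"
  proof -
    have "finite ((\<lambda>j. s (vs ! j)) ` {..<n})" "(\<lambda>j. s (vs ! j)) ` {..<n} \<noteq> {}" using n3 by (auto simp: lessThan_empty_iff)
    then have "Max ((\<lambda>j. s (vs ! j)) ` {..<n}) \<in> (\<lambda>j. s (vs ! j)) ` {..<n}" by (rule Max_in)
    then obtain i where "i < n" "s (vs ! i) = Max ((\<lambda>j. s (vs ! j)) ` {..<n})" by auto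
    then show ?thesis using that by auto
  qed
  define p where "p = (i + n - 1) mod n"
  define q where "q = (i + 1) mod n"
  have p: "p < n" "(p + 1) mod n = i" "p \<noteq> i"
  proof -
    show "p < n" unfolding p_def using n3 by auto
    show "(p + 1) mod n = i"
    proof (cases i)
      case 0
      then have "p = n - 1" unfolding p_def using n3 by simp
      then show ?thesis using 0 n3 by simp
    next
      case (Suc m)
      then have "p = m" unfolding p_def using i by simp
      then show ?thesis using Suc i by simp
    qed
    show "p \<noteq> i"
    proof
      assume "p = i"
      then have "(i + 1) mod n = i" using \<open>(p + 1) mod n = i\<close> by simp
      then show False using i n3
        by (cases "i + 1 = n") auto
    qed
  qed
  have q: "q < n" unfolding q_def using n3 by auto
  have a1: "adj (vs ! p) (vs ! i)" using ad p by metis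
  have a2: "adj (vs ! q) (vs ! i)" using ad i unfolding q_def by (metis adj_sym)
  have le1: "\<forall>l. (vs ! p) l \<le> (vs ! i) l"
    using adj_sum_le[OF a1] im p(1) unfolding s_def by blast
  have le2: "\<forall>l. (vs ! q) l \<le> (vs ! i) l"
    using adj_sum_le[OF a2] im q unfolding s_def by blast
  have "g k (cyc_edge vs p) = (\<lambda>l. FF k ((vs ! i) l))"
    unfolding cyc_edge_def n_def[symmetric] p(2) g_eq[OF assms a1]
    using le1 by (simp add: max_def)
  moreover have "g k (cyc_edge vs i) = (\<lambda>l. FF k ((vs ! i) l))"
    unfolding cyc_edge_def n_def[symmetric] q_def[symmetric] insert_commute[of "vs ! i"] g_eq[OF assms a2]
    using le2 by (simp add: max_def)
  ultimately show "\<exists>i j. i < length vs \<and> j < length vs \<and> i \<noteq> j \<and>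
                   g k (cyc_edge vs i) = g k (cyc_edge vs j)"
    using p i unfolding n_def by metis
qed

end
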